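(* Let $p\le q$ be positive integers. The complete bipartite graph $K_{p,q}$ is a TRVG if and only if $p\le 2$ or $(p,q)\in\{(3,3),(3,4)\}$.
   Context: A graph $G$ is a transparent rectangle visibility graph (TRVG) if its vertices can be represented by a collection of pairwise non-overlapping rectangles in the plane whose sides are parallel to the coordinate axes, one per vertex, such that two distinct vertices are adjacent if and only if there is a horizontal or a vertical line intersecting the interiors of both of their rectangles (other rectangles do not block visibility). *)

theory Defs
  imports Complex_Main
begin

text \<open>An axis-parallel rectangle is given by its lower-left corner (x1,y1) and
upper-right corner (x2,y2) with x1 < x2 and y1 < y2.\<close>

type_synonym rect = "(real \<times> real) \<times> (real \<times> real)"

definition valid_rect :: "rect \<Rightarrow> bool" where
  "valid_rect R \<longleftrightarrow> (case R of ((x1, y1), (x2, y2)) \<Rightarrow> x1 < x2 \<and> y1 < y2)"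

definition rect_interior :: "rect \<Rightarrow> (real \<times> real) set" where
  "rect_interior R = (case R of ((x1, y1), (x2, y2)) \<Rightarrow>
      {(x, y). x1 < x \<and> x < x2 \<and> y1 < y \<and> y < y2})"

definition hline :: "real \<Rightarrow> (real \<times> real) set" where
  "hline c = {(x, y). y = c}"

definition vline :: "real \<Rightarrow> (real \<times> real) set" where
  "vline c = {(x, y). x = c}"

definition sees :: "rect \<Rightarrow> rect \<Rightarrow> bool" where
  "sees R S \<longleftrightarrow>
     (\<exists>c. hline c \<inter> rect_interior R \<noteq> {} \<and> hline c \<inter> rect_interior S \<noteq> {}) \<or>
     (\<exists>c. vline c \<inter> rect_interior R \<noteq> {} \<and> vline c \<inter> rect_interior S \<noteq> {})"

definition TRVG :: "'a set \<Rightarrow> ('a \<Rightarrow> 'a \<Rightarrow> bool) \<Rightarrow> bool" where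
  "TRVG V E \<longleftrightarrow> (\<exists>r :: 'a \<Rightarrow> rect.
      (\<forall>v\<in>V. valid_rect (r v)) \<and>
      (\<forall>u\<in>V. \<forall>v\<in>V. u \<noteq> v \<longrightarrow> rect_interior (r u) \<inter> rect_interior (r v) = {}) \<and>
      (\<forall>u\<in>V. \<forall>v\<in>V. u \<noteq> v \<longrightarrow> (E u v \<longleftrightarrow> sees (r u) (r v))))"

definition Kpq_vertices :: "nat \<Rightarrow> nat \<Rightarrow> (nat + nat) set" where
  "Kpq_vertices p q = Inl ` {..<p} \<union> Inr ` {..<q}"

definition Kpq_adj :: "(nat + nat) \<Rightarrow> (nat + nat) \<Rightarrow> bool" where
  "Kpq_adj u v \<longleftrightarrow> (isl u \<and> \<not> isl v) \<or> (\<not> isl u \<and> isl v)"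

end

theory Submission
  imports Defs
begin


lemma ov_ex: "(\<exists>c::real. a < c \<and> c < b \<and> a' < c \<and> c < b') \<longleftrightarrow> max a a' < min b b'"
proof
  assume "max a a' < min b b'"
  then show "\<exists>c::real. a < c \<and> c < b \<and> a' < c \<and> c < b'"
    by (intro exI[of _ "(max a a' + min b b')/2"]) auto
qed auto

lemma sees_iff:
  assumes "valid_rect R" "valid_rect S"
  shows "sees R S \<longleftrightarrow>
    max (snd (fst R)) (snd (fst S)) < min (snd (snd R)) (snd (snd S)) \<or>
    max (fst (fst R)) (fst (fst S)) < min (fst (snd R)) (fst (snd S))"
proof -
  obtain x1 y1 x2 y2 where R: "R = ((x1,y1),(x2,y2))" by (metis prod.collapse)
  obtain a1 b1 a2 b2 where S: "S = ((a1,b1),(a2,b2))" by (metis prod.collapse)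
  have vr: "x1 < x2" "y1 < y2" "a1 < a2" "b1 < b2" using assms by (auto simp: R S valid_rect_def)
  have h: "hline c \<inter> rect_interior R \<noteq> {} \<longleftrightarrow> y1 < c \<and> c < y2" for c
  proof
    assume "y1 < c \<and> c < y2"
    then have "((x1+x2)/2, c) \<in> hline c \<inter> rect_interior R" using vr by (auto simp: hline_def rect_interior_def R)
    then show "hline c \<inter> rect_interior R \<noteq> {}" by blast
  qed (auto simp: hline_def rect_interior_def R)
  have h2: "hline c \<inter> rect_interior S \<noteq> {} \<longleftrightarrow> b1 < c \<and> c < b2" for c
  proof
    assume "b1 < c \<and> c < b2"
    then have "((a1+a2)/2, c) \<in> hline c \<inter> rect_interior S" using vr by (auto simp: hline_def rect_interior_def S)
    then show "hline c \<inter> rect_interior S \<noteq> {}" by blast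
  qed (auto simp: hline_def rect_interior_def S)
  have v: "vline c \<inter> rect_interior R \<noteq> {} \<longleftrightarrow> x1 < c \<and> c < x2" for c
  proof
    assume "x1 < c \<and> c < x2"
    then have "(c, (y1+y2)/2) \<in> vline c \<inter> rect_interior R" using vr by (auto simp: vline_def rect_interior_def R)
    then show "vline c \<inter> rect_interior R \<noteq> {}" by blast
  qed (auto simp: vline_def rect_interior_def R)
  have v2: "vline c \<inter> rect_interior S \<noteq> {} \<longleftrightarrow> a1 < c \<and> c < a2" for c
  proof
    assume "a1 < c \<and> c < a2"
    then have "(c, (b1+b2)/2) \<in> vline c \<inter> rect_interior S" using vr by (auto simp: vline_def rect_interior_def S)
    then show "vline c \<inter> rect_interior S \<noteq> {}" by blast
  qed (auto simp: vline_def rect_interior_def S)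
  show ?thesis unfolding sees_def h h2 v v2 using ov_ex[of y1 y2 b1 b2] ov_ex[of x1 x2 a1 a2]
    by (simp add: R S conj_ac)
qed

lemma int_disj:
  assumes "valid_rect R" "valid_rect S"
  shows "rect_interior R \<inter> rect_interior S = {} \<longleftrightarrow>
    \<not> (max (snd (fst R)) (snd (fst S)) < min (snd (snd R)) (snd (snd S)) \<and>
    max (fst (fst R)) (fst (fst S)) < min (fst (snd R)) (fst (snd S)))"
proof -
  obtain x1 y1 x2 y2 where R: "R = ((x1,y1),(x2,y2))" by (metis prod.collapse)
  obtain a1 b1 a2 b2 where S: "S = ((a1,b1),(a2,b2))" by (metis prod.collapse)
  have "rect_interior R \<inter> rect_interior S \<noteq> {} \<longleftrightarrow>
     (\<exists>x. x1 < x \<and> x < x2 \<and> a1 < x \<and> x < a2) \<and> (\<exists>y. y1 < y \<and> y < y2 \<and> b1 < y \<and> y < b2)"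
    by (auto simp: rect_interior_def R S)
  then show ?thesis using ov_ex[of y1 y2 b1 b2] ov_ex[of x1 x2 a1 a2] by (auto simp: R S)
qed

lemma count:
  fixes A B :: "nat set" and la ra lb rb :: "nat \<Rightarrow> real"
  assumes fin: "finite A" "finite B" and ne: "A \<noteq> {}"
    and va: "\<forall>i\<in>A. la i < ra i" and vb: "\<forall>j\<in>B. lb j < rb j"
    and da: "\<forall>i\<in>A. \<forall>i'\<in>A. i \<noteq> i' \<longrightarrow> \<not> max (la i) (la i') < min (ra i) (ra i')"
    and db: "\<forall>j\<in>B. \<forall>j'\<in>B. j \<noteq> j' \<longrightarrow> \<not> max (lb j) (lb j') < min (rb j) (rb j')"
  shows "card {(i,j). i \<in> A \<and> j \<in> B \<and> max (la i) (lb j) < min (ra i) (rb j)} + 1 \<le> card A + card B"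
proof -
  define S where "S = {(i,j). i \<in> A \<and> j \<in> B \<and> max (la i) (lb j) < min (ra i) (rb j)}"
  define f where "f = (\<lambda>(i,j). if ra i \<le> rb j then Inl i else (Inr j :: nat + nat))"
  define U where "U = Inl ` A \<union> (Inr ` B :: (nat + nat) set)"
  have finU: "finite U" using fin by (simp add: U_def)
  have cardU: "card U = card A + card B" unfolding U_def
    by (subst card_Un_disjoint) (use fin in \<open>auto simp: card_image\<close>)
  have inj: "inj_on f S"
  proof (rule inj_onI)
    fix x y assume x: "x \<in> S" and y: "y \<in> S" and e: "f x = f y"
    obtain i j where xx: "x = (i,j)" by fastforce
    obtain i' j' where yy: "y = (i',j')" by fastforce
    show "x = y"
    proof (cases "ra i \<le> rb j")
      case True
      then have "ra i' \<le> rb j'" "i = i'" using e by (auto simp: f_def xx yy split: if_splits)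
      moreover have "j = j'"
      proof (rule ccontr)
        assume "j \<noteq> j'"
        then show False using db x y True \<open>ra i' \<le> rb j'\<close> \<open>i = i'\<close>
          unfolding S_def xx yy by (smt (verit) case_prodD mem_Collect_eq)
      qed
      ultimately show ?thesis by (simp add: xx yy)
    next
      case False
      then have "\<not> ra i' \<le> rb j'" "j = j'" using e by (auto simp: f_def xx yy split: if_splits)
      moreover have "i = i'"
      proof (rule ccontr)
        assume "i \<noteq> i'"
        then show False using da x y False \<open>\<not> ra i' \<le> rb j'\<close> \<open>j = j'\<close>
          unfolding S_def xx yy by (smt (verit) case_prodD mem_Collect_eq)
      qed
      ultimately show ?thesis by (simp add: xx yy)
    qed
  qed
  define M where "M = Max (ra ` A \<union> rb ` B)"
  have finM: "finite (ra ` A \<union> rb ` B)" using fin by simp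
  have Mge: "\<forall>i\<in>A. ra i \<le> M" "\<forall>j\<in>B. rb j \<le> M" using finM by (auto simp: M_def)
  have Min: "M \<in> ra ` A \<union> rb ` B" unfolding M_def using finM ne by (intro Max_in) auto
  obtain z where z: "z \<in> U" "z \<notin> f ` S"
  proof (cases "\<exists>j\<in>B. rb j = M")
    case True
    then obtain j0 where j0: "j0 \<in> B" "rb j0 = M" by blast
    have "Inr j0 \<notin> f ` S"
    proof
      assume "Inr j0 \<in> f ` S"
      then obtain i j where "(i,j) \<in> S" "f (i,j) = Inr j0" by auto
      then show False using Mge j0 by (auto simp: f_def S_def split: if_splits)
    qed
    then show ?thesis using that j0 by (auto simp: U_def)
  next
    case False
    then obtain i0 where i0: "i0 \<in> A" "ra i0 = M" using Min by auto
    have "Inl i0 \<notin> f ` S"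
    proof
      assume "Inl i0 \<in> f ` S"
      then obtain i j where ij: "(i,j) \<in> S" "f (i,j) = Inl i0" by auto
      then have "i = i0" "ra i \<le> rb j" "j \<in> B" by (auto simp: f_def S_def split: if_splits)
      then show False using Mge i0 False by force
    qed
    then show ?thesis using that i0 by (auto simp: U_def)
  qed
  have sub: "f ` S \<subseteq> U - {z}"
    using z by (auto simp: f_def S_def U_def split: if_splits)
  have "card S = card (f ` S)" using inj by (simp add: card_image)
  also have "\<dots> \<le> card (U - {z})" using sub finU by (intro card_mono) auto
  also have "\<dots> = card U - 1" using z by simp
  finally have "card S \<le> card U - 1" .
  moreover have "card U \<ge> 1" using z finU by (metis One_nat_def Suc_leI card_gt_0_iff empty_iff)
  ultimately show ?thesis using cardU unfolding S_def by linarith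
qed



lemma valid_rect_iff: "valid_rect R \<longleftrightarrow> fst (fst R) < fst (snd R) \<and> snd (fst R) < snd (snd R)"
  by (cases R) (auto simp: valid_rect_def split: prod.splits)

lemma arith_fact:
  fixes p q :: nat
  assumes "1 \<le> p" "p \<le> q" "p * q \<le> 2 * (p + q - 1)"
  shows "p \<le> 2 \<or> (p, q) \<in> {(3, 3), (3, 4)}"
proof (rule ccontr)
  assume n: "\<not> ?thesis"
  then have p3: "p \<ge> 3" by auto
  show False
  proof (cases "p = 3")
    case True
    then show False using n assms by auto
  next
    case False
    then have "p \<ge> 4" using p3 by auto
    then have "4 * q \<le> p * q" by simp
    then show False using assms \<open>p \<ge> 4\<close> by linarith
  qed
qed

lemma only_if:
  fixes p q :: nat
  assumes "1 \<le> p" and "p \<le> q" and T: "TRVG (Kpq_vertices p q) Kpq_adj"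
  shows "p * q \<le> 2 * (p + q - 1)"
proof -
  obtain r where v: "\<forall>v\<in>Kpq_vertices p q. valid_rect (r v)"
    and e: "\<forall>u\<in>Kpq_vertices p q. \<forall>v\<in>Kpq_vertices p q. u \<noteq> v \<longrightarrow> (Kpq_adj u v \<longleftrightarrow> sees (r u) (r v))"
    using T unfolding TRVG_def by blast
  define xl where "xl = (\<lambda>u. fst (fst (r u)))"
  define xr where "xr = (\<lambda>u. fst (snd (r u)))"
  define yl where "yl = (\<lambda>u. snd (fst (r u)))"
  define yr where "yr = (\<lambda>u. snd (snd (r u)))"
  have inA: "Inl i \<in> Kpq_vertices p q" if "i < p" for i using that by (auto simp: Kpq_vertices_def)
  have inB: "Inr j \<in> Kpq_vertices p q" if "j < q" for j using that by (auto simp: Kpq_vertices_def)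
  have vr: "xl u < xr u \<and> yl u < yr u" if "u \<in> Kpq_vertices p q" for u
    using v that by (auto simp: valid_rect_iff xl_def xr_def yl_def yr_def)
  have S: "sees (r u) (r w) \<longleftrightarrow> max (yl u) (yl w) < min (yr u) (yr w) \<or> max (xl u) (xl w) < min (xr u) (xr w)"
    if "u \<in> Kpq_vertices p q" "w \<in> Kpq_vertices p q" for u w
    using sees_iff[OF v[rule_format, OF that(1)] v[rule_format, OF that(2)]]
    by (simp add: xl_def xr_def yl_def yr_def)
  have dA: "\<not> max (yl (Inl i)) (yl (Inl i')) < min (yr (Inl i)) (yr (Inl i')) \<and>
            \<not> max (xl (Inl i)) (xl (Inl i')) < min (xr (Inl i)) (xr (Inl i'))"
    if "i < p" "i' < p" "i \<noteq> i'" for i i'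
    using e[rule_format, OF inA[OF that(1)] inA[OF that(2)]] S[OF inA[OF that(1)] inA[OF that(2)]] that
    by (auto simp: Kpq_adj_def)
  have dB: "\<not> max (yl (Inr i)) (yl (Inr i')) < min (yr (Inr i)) (yr (Inr i')) \<and>
            \<not> max (xl (Inr i)) (xl (Inr i')) < min (xr (Inr i)) (xr (Inr i'))"
    if "i < q" "i' < q" "i \<noteq> i'" for i i'
    using e[rule_format, OF inB[OF that(1)] inB[OF that(2)]] S[OF inB[OF that(1)] inB[OF that(2)]] that
    by (auto simp: Kpq_adj_def)
  have cr: "max (yl (Inl i)) (yl (Inr j)) < min (yr (Inl i)) (yr (Inr j)) \<or>
            max (xl (Inl i)) (xl (Inr j)) < min (xr (Inl i)) (xr (Inr j))"
    if "i < p" "j < q" for i j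
    using e[rule_format, OF inA[OF that(1)] inB[OF that(2)]] S[OF inA[OF that(1)] inB[OF that(2)]]
    by (auto simp: Kpq_adj_def)
  define SX where "SX = {(i,j). i \<in> {..<p} \<and> j \<in> {..<q} \<and>
     max (xl (Inl i)) (xl (Inr j)) < min (xr (Inl i)) (xr (Inr j))}"
  define SY where "SY = {(i,j). i \<in> {..<p} \<and> j \<in> {..<q} \<and>
     max (yl (Inl i)) (yl (Inr j)) < min (yr (Inl i)) (yr (Inr j))}"
  have cX: "card SX + 1 \<le> card {..<p} + card {..<q}" unfolding SX_def
    apply (rule count)
    using assms(1) vr inA inB dA dB by (auto simp: lessThan_empty_iff)
  have cY: "card SY + 1 \<le> card {..<p} + card {..<q}" unfolding SY_def
    apply (rule count)
    using assms(1) vr inA inB dA dB by (auto simp: lessThan_empty_iff)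
  have fin: "finite SX" "finite SY"
    by (rule finite_subset[of _ "{..<p} \<times> {..<q}"], auto simp: SX_def SY_def)+
  have "{..<p} \<times> {..<q} \<subseteq> SX \<union> SY" using cr by (auto simp: SX_def SY_def)
  then have "card ({..<p} \<times> {..<q}) \<le> card (SX \<union> SY)" using fin by (intro card_mono) auto
  also have "\<dots> \<le> card SX + card SY" by (rule card_Un_le)
  finally have "p * q \<le> card SX + card SY" by (simp add: card_cartesian_product)
  then show ?thesis using cX cY by simp
qed

lemma mm: "max (a::real) b < min c d \<longleftrightarrow> a < c \<and> a < d \<and> b < c \<and> b < d"
  by auto

lemma natsep: "(j::nat) \<noteq> j' \<Longrightarrow> real j + 1 \<le> real j' \<or> real j' + 1 \<le> real j"
  by linarith

definition r2 :: "nat \<Rightarrow> (nat + nat) \<Rightarrow> rect" where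
  "r2 q u = (case u of
      Inl i \<Rightarrow> (if i = 0 then ((0,0),(real q,real q)) else ((2*real q,2*real q),(3*real q,3*real q)))
    | Inr j \<Rightarrow> ((real j, 2*real q + real j), (real j + 1, 2*real q + real j + 1)))"

lemma if2:
  fixes p q :: nat
  assumes "1 \<le> p" "p \<le> 2" "p \<le> q"
  shows "TRVG (Kpq_vertices p q) Kpq_adj"
  unfolding TRVG_def
proof (intro exI[of _ "r2 q"] conjI ballI impI)
  have q: "real q \<ge> 1" using assms by simp
  have V: "u \<in> Kpq_vertices p q \<Longrightarrow> (u = Inl 0 \<or> u = Inl 1 \<or> (\<exists>j. j < q \<and> u = Inr j))" for u
    using assms by (auto simp: Kpq_vertices_def)
  have vv: "valid_rect (r2 q v)" if "v \<in> Kpq_vertices p q" for v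
    using V[OF that] q by (auto simp: r2_def valid_rect_iff)
  then show "\<And>v. v \<in> Kpq_vertices p q \<Longrightarrow> valid_rect (r2 q v)" .
  fix u v assume u: "u \<in> Kpq_vertices p q" and v: "v \<in> Kpq_vertices p q" and uv: "u \<noteq> v"
  have jb: "j < q \<Longrightarrow> real j + 1 \<le> real q" for j by linarith
  have "(rect_interior (r2 q u) \<inter> rect_interior (r2 q v) = {}) \<and> (Kpq_adj u v = sees (r2 q u) (r2 q v))"
    unfolding int_disj[OF vv[OF u] vv[OF v]] sees_iff[OF vv[OF u] vv[OF v]]
    using V[OF u] V[OF v] uv
    using q jb by (elim disjE exE conjE) (auto simp: r2_def mm Kpq_adj_def dest!: natsep)
  then show "rect_interior (r2 q u) \<inter> rect_interior (r2 q v) = {}"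
    "Kpq_adj u v = sees (r2 q u) (r2 q v)" by auto
qed

definition ypB :: "nat \<Rightarrow> real" where
  "ypB j = (if j = 0 then 2 else if j = 1 then 0 else if j = 2 then 6 else 4)"

definition r3 :: "(nat + nat) \<Rightarrow> rect" where
  "r3 u = (case u of
      Inl i \<Rightarrow> ((2 * (2 * real i + 1), 2 * (5 - 2 * real i)), (2 * (2 * real i + 1) + 3, 2 * (5 - 2 * real i) + 3))
    | Inr j \<Rightarrow> ((2 * (2 * real j), 2 * ypB j), (2 * (2 * real j) + 3, 2 * ypB j + 3)))"

lemma if3:
  fixes q :: nat
  assumes "q = 3 \<or> q = 4"
  shows "TRVG (Kpq_vertices 3 q) Kpq_adj"
  unfolding TRVG_def
proof (intro exI[of _ r3] conjI ballI impI)
  have V: "u \<in> Kpq_vertices 3 q \<Longrightarrow> u = Inl 0 \<or> u = Inl 1 \<or> u = Inl 2 \<or> u = Inr 0 \<or> u = Inr 1 \<or> u = Inr 2 \<or> u = Inr 3" for u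
    using assms by (auto simp: Kpq_vertices_def lessThan_nat_numeral)
  have vv: "valid_rect (r3 v)" if "v \<in> Kpq_vertices 3 q" for v
    using V[OF that] by (auto simp: r3_def ypB_def valid_rect_iff)
  then show "\<And>v. v \<in> Kpq_vertices 3 q \<Longrightarrow> valid_rect (r3 v)" .
  fix u v assume u: "u \<in> Kpq_vertices 3 q" and v: "v \<in> Kpq_vertices 3 q" and uv: "u \<noteq> v"
  have "(rect_interior (r3 u) \<inter> rect_interior (r3 v) = {}) \<and> (Kpq_adj u v = sees (r3 u) (r3 v))"
    unfolding int_disj[OF vv[OF u] vv[OF v]] sees_iff[OF vv[OF u] vv[OF v]]
    using V[OF u] V[OF v] uv
    by (elim disjE; simp add: r3_def ypB_def mm Kpq_adj_def)
  then show "rect_interior (r3 u) \<inter> rect_interior (r3 v) = {}"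
    "Kpq_adj u v = sees (r3 u) (r3 v)" by auto
qed

theorem theorem3:
  fixes p q :: nat
  assumes "1 \<le> p" and "p \<le> q"
  shows "TRVG (Kpq_vertices p q) Kpq_adj \<longleftrightarrow> p \<le> 2 \<or> (p, q) \<in> {(3, 3), (3, 4)}"
proof
  assume "TRVG (Kpq_vertices p q) Kpq_adj"
  then show "p \<le> 2 \<or> (p, q) \<in> {(3, 3), (3, 4)}"
    using arith_fact[OF assms only_if[OF assms]] by blast
next
  assume "p \<le> 2 \<or> (p, q) \<in> {(3, 3), (3, 4)}"
  then show "TRVG (Kpq_vertices p q) Kpq_adj"
    using if2[OF assms(1) _ assms(2)] if3 by auto
qed

end
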